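(* Fix $\alpha\in\mathbb{R}\setminus\{0,1\}$ and let $F$ be the (weighted) generalized entropy index of parameter $\alpha$ defined in the context, with $q(\mu)=\mu^\alpha$. Let $n\ge 1$, let $K\in\mathbb{R}_{\ge 0}^{n\times n}$ be column-normalized, i.e. $\sum_{i=1}^n K_{ij}=1$ for every $j$, and assume every row of $K$ has positive sum, i.e. $K_i^\top\vec 1>0$ for all $i$, where $K_i$ denotes the $i$-th row of $K$. Then for every $\vec y\in\mathbb{R}_{>0}^n$, with $\mu=\frac1n\sum_{i=1}^n y_i$, $$F(\vec y)=\sum_{i=1}^n \frac{q\big(A(K,\vec y)_i\big)\,K_i^\top\vec 1}{q(\mu)\,n}\,F(\vec y,K_i)\;+\;F\big(A(K,\vec y),K\vec 1\big).$$
   Context: For $x\in\mathbb{R}_{>0}^n$ and a weight vector $w\in\mathbb{R}_{\ge0}^n$ with $\|w\|_1>0$, the weighted mean is $\mu_w=\sum_i w_i x_i/\|w\|_1$, and the weighted generalized entropy of parameter $\alpha\notin\{0,1\}$ is $F(x,w)=\frac{1}{\alpha(\alpha-1)}\sum_{i=1}^n\frac{w_i}{\|w\|_1}\big((x_i/\mu_w)^\alpha-1\big)$. The unweighted index is $F(x)=F(x,\vec 1)=\frac{1}{n\alpha(\alpha-1)}\sum_{i=1}^n\big((x_i/\mu)^\alpha-1\big)$ with $\mu=\frac1n\sum_i x_i$. For a nonnegative matrix $K$ with positive row sums and $\vec y\in\mathbb{R}^n$, the averaging operator is $A(K,\vec y)=\frac{K\vec y}{K\vec 1}$, with division taken entrywise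 and $\vec 1$ the all-ones vector (so $A(K,\vec y)_i$ is the average of $\vec y$ weighted by row $i$ of $K$). *)

theory Defs
  imports Complex_Main
begin

text \<open>Vectors in R^n are represented as functions nat => real, only indices i < n matter.
  Matrices as nat => nat => real, K i j is the entry in row i, column j.\<close>

definition l1norm :: "nat \<Rightarrow> (nat \<Rightarrow> real) \<Rightarrow> real" where
  "l1norm n w = (\<Sum>i<n. \<bar>w i\<bar>)"

definition wmean :: "nat \<Rightarrow> (nat \<Rightarrow> real) \<Rightarrow> (nat \<Rightarrow> real) \<Rightarrow> real" where
  "wmean n x w = (\<Sum>i<n. w i * x i) / l1norm n w"

definition GE :: "real \<Rightarrow> nat \<Rightarrow> (nat \<Rightarrow> real) \<Rightarrow> (nat \<Rightarrow> real) \<Rightarrow> real" where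
  "GE \<alpha> n x w = 1 / (\<alpha> * (\<alpha> - 1)) *
     (\<Sum>i<n. w i / l1norm n w * ((x i / wmean n x w) powr \<alpha> - 1))"

definition GE1 :: "real \<Rightarrow> nat \<Rightarrow> (nat \<Rightarrow> real) \<Rightarrow> real" where
  "GE1 \<alpha> n x = GE \<alpha> n x (\<lambda>_. 1)"

definition rowsum :: "nat \<Rightarrow> (nat \<Rightarrow> nat \<Rightarrow> real) \<Rightarrow> nat \<Rightarrow> real" where
  "rowsum n K i = (\<Sum>j<n. K i j)"

definition avg_op :: "nat \<Rightarrow> (nat \<Rightarrow> nat \<Rightarrow> real) \<Rightarrow> (nat \<Rightarrow> real) \<Rightarrow> nat \<Rightarrow> real" where
  "avg_op n K y i = (\<Sum>j<n. K i j * y j) / rowsum n K i"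

end

theory Submission
  imports Defs
begin

theorem proposition1:
  fixes \<alpha> :: real and n :: nat and K :: "nat \<Rightarrow> nat \<Rightarrow> real" and y :: "nat \<Rightarrow> real"
  assumes "\<alpha> \<noteq> 0" and "\<alpha> \<noteq> 1"
    and "n \<ge> 1"
    and "\<And>i j. i < n \<Longrightarrow> j < n \<Longrightarrow> K i j \<ge> 0"
    and "\<And>j. j < n \<Longrightarrow> (\<Sum>i<n. K i j) = 1"
    and "\<And>i. i < n \<Longrightarrow> rowsum n K i > 0"
    and "\<And>i. i < n \<Longrightarrow> y i > 0"
  shows "GE1 \<alpha> n y =
    (\<Sum>i<n. (avg_op n K y i powr \<alpha> * rowsum n K i)
              / (((\<Sum>j<n. y j) / real n) powr \<alpha> * real n)
            * GE \<alpha> n y (\<lambda>j. K i j))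
    + GE \<alpha> n (avg_op n K y) (rowsum n K)"
proof -
  define c where "c = 1 / (\<alpha> * (\<alpha> - 1))"
  define S where "S = (\<Sum>j<n. y j)"
  define \<mu> where "\<mu> = S / real n"
  define r where "r = rowsum n K"
  define a where "a = avg_op n K y"
  have npos: "real n > 0" using assms(3) by simp
  have Spos: "S > 0" unfolding S_def
    using assms(3,7) by (intro sum_pos) (auto simp: lessThan_empty_iff)
  have mupos: "\<mu> > 0" using Spos npos by (simp add: \<mu>_def)
  have rpos: "\<And>i. i < n \<Longrightarrow> r i > 0" using assms(6) by (simp add: r_def)
  have l1K: "\<And>i. i < n \<Longrightarrow> l1norm n (K i) = r i"
    unfolding l1norm_def r_def rowsum_def using assms(4)
    by (intro sum.cong) auto
  have sumr: "(\<Sum>i<n. r i) = real n"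
  proof -
    have "(\<Sum>i<n. r i) = (\<Sum>j<n. \<Sum>i<n. K i j)"
      unfolding r_def rowsum_def by (rule sum.swap)
    also have "\<dots> = (\<Sum>j<n. 1)" using assms(5) by (intro sum.cong) auto
    finally show ?thesis by simp
  qed
  have l1r: "l1norm n r = real n"
    unfolding l1norm_def
  proof -
    have "(\<Sum>i<n. \<bar>r i\<bar>) = (\<Sum>i<n. r i)" using rpos by (intro sum.cong) (auto simp: less_imp_le)
    then show "(\<Sum>i<n. \<bar>r i\<bar>) = real n" using sumr by simp
  qed
  have l11: "l1norm n (\<lambda>_. 1) = real n" by (simp add: l1norm_def)
  have numpos: "\<And>i. i < n \<Longrightarrow> (\<Sum>j<n. K i j * y j) > 0"
  proof -
    fix i assume i: "i < n"
    have "rowsum n K i > 0" using assms(6) i by simp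
    then obtain j where j: "j < n" "K i j > 0" unfolding rowsum_def
      using assms(4)[OF i] by (metis (no_types, lifting) less_le sum_nonpos lessThan_iff linorder_not_le)
    have "0 < K i j * y j" using j assms(7) by simp
    also have "\<dots> \<le> (\<Sum>j<n. K i j * y j)"
      using j assms(4)[OF i] assms(7)
      by (intro member_le_sum) (auto intro!: mult_nonneg_nonneg simp: less_imp_le)
    finally show "(\<Sum>j<n. K i j * y j) > 0" .
  qed
  have apos: "\<And>i. i < n \<Longrightarrow> a i > 0"
    unfolding a_def avg_op_def using numpos assms(6) by simp
  have wmK: "\<And>i. i < n \<Longrightarrow> wmean n y (\<lambda>j. K i j) = a i"
    unfolding wmean_def a_def avg_op_def using l1K by (simp add: r_def mult.commute)
  have sumra: "(\<Sum>i<n. r i * a i) = S"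
  proof -
    have "(\<Sum>i<n. r i * a i) = (\<Sum>i<n. \<Sum>j<n. K i j * y j)"
      unfolding a_def avg_op_def r_def using assms(6) by (intro sum.cong) (auto dest!: assms(6))
    also have "\<dots> = (\<Sum>j<n. \<Sum>i<n. K i j * y j)" by (rule sum.swap)
    also have "\<dots> = (\<Sum>j<n. (\<Sum>i<n. K i j) * y j)" by (simp add: sum_distrib_right)
    also have "\<dots> = S" unfolding S_def using assms(5) by (intro sum.cong) auto
    finally show ?thesis .
  qed
  have wma: "wmean n a r = \<mu>"
    unfolding wmean_def l1r \<mu>_def using sumra by simp
  have wm1: "wmean n y (\<lambda>_. 1) = \<mu>"
    unfolding wmean_def l11 \<mu>_def S_def by simp
  have termi: "(a i powr \<alpha> * r i) / (\<mu> powr \<alpha> * real n) * GE \<alpha> n y (\<lambda>j. K i j)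
      = c / (\<mu> powr \<alpha> * real n) * (\<Sum>j<n. K i j * (y j powr \<alpha> - a i powr \<alpha>))"
    if i: "i < n" for i
  proof -
    have ap: "a i powr \<alpha> > 0" using apos[OF i] by simp
    have "GE \<alpha> n y (\<lambda>j. K i j) = c * (\<Sum>j<n. K i j / r i * ((y j / a i) powr \<alpha> - 1))"
      unfolding GE_def c_def using l1K[OF i] wmK[OF i] by simp
    also have "\<dots> = c * (\<Sum>j<n. (1 / (r i * a i powr \<alpha>)) * (K i j * (y j powr \<alpha> - a i powr \<alpha>)))"
      using rpos[OF i] ap assms(7) apos[OF i]
      by (intro arg_cong[where f="(*) c"] sum.cong refl)
         (simp add: powr_divide less_imp_le field_simps)
    also have "\<dots> = c / (r i * a i powr \<alpha>) * (\<Sum>j<n. K i j * (y j powr \<alpha> - a i powr \<alpha>))"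
      by (simp add: sum_divide_distrib[symmetric])
    finally show ?thesis using rpos[OF i] ap by simp
  qed
  have swap: "(\<Sum>i<n. \<Sum>j<n. K i j * (y j powr \<alpha> - a i powr \<alpha>))
       = (\<Sum>j<n. y j powr \<alpha>) - (\<Sum>i<n. r i * a i powr \<alpha>)"
  proof -
    have "(\<Sum>i<n. \<Sum>j<n. K i j * (y j powr \<alpha> - a i powr \<alpha>))
        = (\<Sum>i<n. \<Sum>j<n. K i j * y j powr \<alpha>) - (\<Sum>i<n. \<Sum>j<n. K i j * a i powr \<alpha>)"
      by (simp add: right_diff_distrib sum_subtractf)
    also have "(\<Sum>i<n. \<Sum>j<n. K i j * y j powr \<alpha>) = (\<Sum>j<n. \<Sum>i<n. K i j * y j powr \<alpha>)"
      by (rule sum.swap)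
    also have "\<dots> = (\<Sum>j<n. y j powr \<alpha>)"
      using assms(5) by (intro sum.cong) (auto simp: sum_distrib_right[symmetric])
    also have "(\<Sum>i<n. \<Sum>j<n. K i j * a i powr \<alpha>) = (\<Sum>i<n. r i * a i powr \<alpha>)"
      by (simp add: r_def rowsum_def sum_distrib_right)
    finally show ?thesis .
  qed
  have mp: "\<mu> powr \<alpha> > 0" using mupos by simp
  have part1: "(\<Sum>i<n. (a i powr \<alpha> * r i) / (\<mu> powr \<alpha> * real n) * GE \<alpha> n y (\<lambda>j. K i j))
     = c / (\<mu> powr \<alpha> * real n) * ((\<Sum>j<n. y j powr \<alpha>) - (\<Sum>i<n. r i * a i powr \<alpha>))"
    using termi by (simp add: swap[symmetric] sum_distrib_left)
  have part2: "GE \<alpha> n a r = c / (\<mu> powr \<alpha> * real n) * (\<Sum>i<n. r i * a i powr \<alpha>) - c"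
  proof -
    have "GE \<alpha> n a r = c * (\<Sum>i<n. r i / real n * ((a i / \<mu>) powr \<alpha> - 1))"
      unfolding GE_def c_def l1r wma by simp
    also have "\<dots> = c * (\<Sum>i<n. (1 / (\<mu> powr \<alpha> * real n)) * (r i * a i powr \<alpha>) - r i / real n)"
      using apos mupos mp npos
      by (intro arg_cong[where f="(*) c"] sum.cong refl)
         (simp add: powr_divide less_imp_le field_simps)
    also have "\<dots> = c / (\<mu> powr \<alpha> * real n) * (\<Sum>i<n. r i * a i powr \<alpha>) - c"
      using npos by (simp add: sum_subtractf sum_distrib_left[symmetric] sum_divide_distrib[symmetric] sumr right_diff_distrib)
    finally show ?thesis .
  qed
  have lhs: "GE1 \<alpha> n y = c / (\<mu> powr \<alpha> * real n) * (\<Sum>j<n. y j powr \<alpha>) - c"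
  proof -
    have "GE1 \<alpha> n y = c * (\<Sum>j<n. 1 / real n * ((y j / \<mu>) powr \<alpha> - 1))"
      unfolding GE1_def GE_def c_def l11 wm1 by simp
    also have "\<dots> = c * (\<Sum>j<n. (1 / (\<mu> powr \<alpha> * real n)) * y j powr \<alpha> - 1 / real n)"
      using assms(7) mupos mp npos
      by (intro arg_cong[where f="(*) c"] sum.cong refl)
         (simp add: powr_divide less_imp_le field_simps)
    also have "\<dots> = c / (\<mu> powr \<alpha> * real n) * (\<Sum>j<n. y j powr \<alpha>) - c"
      using npos by (simp add: sum_subtractf sum_divide_distrib[symmetric] right_diff_distrib)
    finally show ?thesis .
  qed
  show ?thesis
    unfolding S_def[symmetric] \<mu>_def[symmetric] r_def[symmetric] a_def[symmetric]
    unfolding lhs part1 part2 by (simp add: algebra_simps)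
qed

end
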